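(* Let $T$ be a tournament and let $X,M\subseteq V(T)$ be such that $X$ dominates $T$. Then $T$ is $M$-sparse if and only if $T[X]$ is $(M\cap X)$-sparse and $T-X$ is $(M\setminus X)$-sparse.
   Context: A tournament is a digraph with exactly one arc between each pair of distinct vertices; $T[X]$ is the subtournament induced by $X$ and $T-X$ the one induced by $V(T)\setminus X$. $X$ dominates $T$ if $(x,y)\in A(T)$ for every $x\in X$ and every $y\in V(T)\setminus X$. For an ordering $\sigma$ of the vertices of a tournament, an arc $(x,y)$ is backward if $y$ precedes $x$, and $d_\sigma(v)$ is the number of backward arcs incident to $v$. For a tournament $S$ and $N\subseteq V(S)$, $S$ is $N$-sparse if there is an ordering $\sigma$ of $V(S)$ with $d_\sigma(v)\le1$ for all $v\in V(S)$ and $d_\sigma(v)=0$ for all $v\in N$. *)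

theory Defs
  imports Main
begin

definition tournament :: "'a set \<Rightarrow> ('a \<times> 'a) set \<Rightarrow> bool" where
  "tournament V A \<longleftrightarrow> finite V \<and> A \<subseteq> V \<times> V \<and> (\<forall>x\<in>V. (x, x) \<notin> A) \<and>
     (\<forall>x\<in>V. \<forall>y\<in>V. x \<noteq> y \<longrightarrow> ((x, y) \<in> A \<longleftrightarrow> (y, x) \<notin> A))"

definition induced_arcs :: "('a \<times> 'a) set \<Rightarrow> 'a set \<Rightarrow> ('a \<times> 'a) set" where
  "induced_arcs A X = A \<inter> (X \<times> X)"

definition dominates :: "'a set \<Rightarrow> ('a \<times> 'a) set \<Rightarrow> 'a set \<Rightarrow> bool" where
  "dominates V A X \<longleftrightarrow> (\<forall>x\<in>X. \<forall>y\<in>V - X. (x, y) \<in> A)"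

definition is_ordering :: "'a set \<Rightarrow> 'a list \<Rightarrow> bool" where
  "is_ordering V \<sigma> \<longleftrightarrow> distinct \<sigma> \<and> set \<sigma> = V"

definition precedes :: "'a list \<Rightarrow> 'a \<Rightarrow> 'a \<Rightarrow> bool" where
  "precedes \<sigma> y x \<longleftrightarrow> (\<exists>i j. i < j \<and> j < length \<sigma> \<and> \<sigma> ! i = y \<and> \<sigma> ! j = x)"

definition backward_arcs :: "'a list \<Rightarrow> ('a \<times> 'a) set \<Rightarrow> ('a \<times> 'a) set" where
  "backward_arcs \<sigma> A = {(x, y) \<in> A. precedes \<sigma> y x}"

definition back_deg :: "'a list \<Rightarrow> ('a \<times> 'a) set \<Rightarrow> 'a \<Rightarrow> nat" where
  "back_deg \<sigma> A v = card {e \<in> backward_arcs \<sigma> A. fst e = v \<or> snd e = v}"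

definition sparse :: "'a set \<Rightarrow> ('a \<times> 'a) set \<Rightarrow> 'a set \<Rightarrow> bool" where
  "sparse V A N \<longleftrightarrow> (\<exists>\<sigma>. is_ordering V \<sigma> \<and>
     (\<forall>v\<in>V. back_deg \<sigma> A v \<le> 1) \<and> (\<forall>v\<in>N. back_deg \<sigma> A v = 0))"

end

theory Submission
  imports Defs
begin

lemma precedes_Nil[simp]: "\<not> precedes [] y x"
  unfolding precedes_def by auto

lemma precedes_Cons: "precedes (a # s) y x \<longleftrightarrow> (a = y \<and> x \<in> set s) \<or> precedes s y x"
proof
  assume "precedes (a # s) y x"
  then obtain i j where ij: "i < j" "j < length (a # s)" "(a # s) ! i = y" "(a # s) ! j = x"
    unfolding precedes_def by blast
  show "(a = y \<and> x \<in> set s) \<or> precedes s y x"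
  proof (cases i)
    case 0
    then have "a = y" using ij by simp
    moreover have "x \<in> set s" using ij
      by (cases j) auto
    ultimately show ?thesis by blast
  next
    case (Suc i')
    then obtain j' where "j = Suc j'" using ij by (cases j) auto
    then have "precedes s y x" unfolding precedes_def using ij Suc
      by (rule_tac x=i' in exI, rule_tac x=j' in exI) auto
    then show ?thesis by blast
  qed
next
  assume "(a = y \<and> x \<in> set s) \<or> precedes s y x"
  then show "precedes (a # s) y x"
  proof
    assume h: "a = y \<and> x \<in> set s"
    then obtain k where "k < length s" "s ! k = x" by (meson in_set_conv_nth)
    then show ?thesis unfolding precedes_def using h
      by (rule_tac x=0 in exI, rule_tac x="Suc k" in exI) auto
  next
    assume "precedes s y x"
    then obtain i j where ij: "i < j" "j < length s" "s ! i = y" "s ! j = x"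
      unfolding precedes_def by blast
    then show ?thesis unfolding precedes_def
      by (rule_tac x="Suc i" in exI, rule_tac x="Suc j" in exI) auto
  qed
qed

lemma precedes_set: "precedes s y x \<Longrightarrow> y \<in> set s \<and> x \<in> set s"
  by (induction s) (auto simp: precedes_Cons)

lemma precedes_filter: "precedes (filter P s) y x \<longleftrightarrow> P y \<and> P x \<and> precedes s y x"
  by (induction s) (auto simp: precedes_Cons dest: precedes_set)

lemma precedes_append: "precedes (s @ t) y x \<longleftrightarrow>
   precedes s y x \<or> precedes t y x \<or> (y \<in> set s \<and> x \<in> set t)"
  by (induction s) (auto simp: precedes_Cons)

lemma backward_sub: "backward_arcs s A \<subseteq> set s \<times> set s"
  unfolding backward_arcs_def by (auto dest: precedes_set)

lemma back_deg_mono: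
  assumes "backward_arcs s A \<subseteq> backward_arcs t B"
  shows "back_deg s A v \<le> back_deg t B v"
  unfolding back_deg_def
  apply (rule card_mono)
  using backward_sub[of t B] apply (auto intro: finite_subset)[1]
  using assms by auto

theorem mainTheorem13:
  fixes V X M :: "'a set" and A :: "('a \<times> 'a) set"
  assumes "tournament V A"
    and "X \<subseteq> V" and "M \<subseteq> V"
    and "dominates V A X"
  shows "sparse V A M \<longleftrightarrow>
           sparse X (induced_arcs A X) (M \<inter> X) \<and>
           sparse (V - X) (induced_arcs A (V - X)) (M - X)"
proof
  assume "sparse V A M"
  then obtain s where s: "is_ordering V s" "\<forall>v\<in>V. back_deg s A v \<le> 1" "\<forall>v\<in>M. back_deg s A v = 0"
    unfolding sparse_def by blast
  have gen: "sparse Y (induced_arcs A Y) (M \<inter> Y)" if "Y \<subseteq> V" for Y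
  proof -
    let ?t = "filter (\<lambda>v. v \<in> Y) s"
    have o: "is_ordering Y ?t" using s(1) that unfolding is_ordering_def by auto
    have sub: "backward_arcs ?t (induced_arcs A Y) \<subseteq> backward_arcs s A"
      unfolding backward_arcs_def induced_arcs_def by (auto simp: precedes_filter)
    show ?thesis unfolding sparse_def
    proof (intro exI conjI ballI)
      show "is_ordering Y ?t" by (rule o)
    next
      fix v assume "v \<in> Y"
      then show "back_deg ?t (induced_arcs A Y) v \<le> 1"
        using s(2) that back_deg_mono[OF sub, of v] by force
    next
      fix v assume "v \<in> M \<inter> Y"
      then show "back_deg ?t (induced_arcs A Y) v = 0"
        using s(3) back_deg_mono[OF sub, of v] by force
    qed
  qed
  have "M - X = M \<inter> (V - X)" using assms(3) by blast
  then show "sparse X (induced_arcs A X) (M \<inter> X) \<and>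
           sparse (V - X) (induced_arcs A (V - X)) (M - X)"
    using gen[OF assms(2)] gen[of "V - X"] by auto
next
  assume "sparse X (induced_arcs A X) (M \<inter> X) \<and>
           sparse (V - X) (induced_arcs A (V - X)) (M - X)"
  then obtain s t where
    s: "is_ordering X s" "\<forall>v\<in>X. back_deg s (induced_arcs A X) v \<le> 1"
       "\<forall>v\<in>M \<inter> X. back_deg s (induced_arcs A X) v = 0" and
    t: "is_ordering (V - X) t" "\<forall>v\<in>V - X. back_deg t (induced_arcs A (V - X)) v \<le> 1"
       "\<forall>v\<in>M - X. back_deg t (induced_arcs A (V - X)) v = 0"
    unfolding sparse_def by blast
  have o: "is_ordering V (s @ t)" using s(1) t(1) assms(2) unfolding is_ordering_def by auto
  have no_cross: "(x, y) \<notin> A" if "x \<in> V - X" "y \<in> X" for x y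
  proof -
    have "(y, x) \<in> A" using assms(4) that unfolding dominates_def by blast
    moreover have "x \<in> V" "y \<in> V" "x \<noteq> y" using that assms(2) by auto
    ultimately show ?thesis using assms(1) unfolding tournament_def by metis
  qed
  have BA: "backward_arcs (s @ t) A = backward_arcs s (induced_arcs A X) \<union> backward_arcs t (induced_arcs A (V - X))"
    using s(1) t(1) no_cross unfolding backward_arcs_def induced_arcs_def is_ordering_def
    by (auto simp: precedes_append dest: precedes_set)
  have dX: "back_deg (s @ t) A v = back_deg s (induced_arcs A X) v" if "v \<in> X" for v
  proof -
    have "{e \<in> backward_arcs (s @ t) A. fst e = v \<or> snd e = v} = {e \<in> backward_arcs s (induced_arcs A X). fst e = v \<or> snd e = v}"
      using BA backward_sub[of t "induced_arcs A (V - X)"] t(1) that unfolding is_ordering_def by auto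
    then show ?thesis unfolding back_deg_def by simp
  qed
  have dY: "back_deg (s @ t) A v = back_deg t (induced_arcs A (V - X)) v" if "v \<in> V - X" for v
  proof -
    have "{e \<in> backward_arcs (s @ t) A. fst e = v \<or> snd e = v} = {e \<in> backward_arcs t (induced_arcs A (V - X)). fst e = v \<or> snd e = v}"
      using BA backward_sub[of s "induced_arcs A X"] s(1) that unfolding is_ordering_def by auto
    then show ?thesis unfolding back_deg_def by simp
  qed
  show "sparse V A M" unfolding sparse_def
  proof (intro exI conjI ballI)
    show "is_ordering V (s @ t)" by (rule o)
  next
    fix v assume "v \<in> V" then show "back_deg (s @ t) A v \<le> 1"
      using dX dY s(2) t(2) by (cases "v \<in> X") auto
  next
    fix v assume "v \<in> M" then show "back_deg (s @ t) A v = 0"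
      using dX dY s(3) t(3) assms(3) by (cases "v \<in> X") auto
  qed
qed

end
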